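(* Consider a local sparse Pauli channel (satisfying Assumption (A)) on an $n$-qubit qLDPC code. Choose $\epsilon,\delta>0$ and any nontrivial syndrome class $C\in\mathcal C^*$. Then the sample size $N$ required to estimate $\log\nu_C$ to additive error within $\epsilon$ with confidence $1-\delta$ using the recursive estimator below is independent of $n$ and scales as $$N=\mathcal O\!\left(\frac{1}{\epsilon^2}\log\frac1\delta\right).$$
   Context: $\mathcal P_n$: $n$-qubit Paulis without phases; $[[A,B]]=\pm1$ according to commutation, $\langle A,B\rangle\in\{0,1\}$ is $0$ iff they commute. A collection $\Gamma$ of supports $\gamma\subseteq\{1,\dots,n\}$ carries local Pauli channels with distributions $P_\gamma$ supported on Paulis with support in $\gamma$; total channel $\mathcal N_\Gamma=\circ_\gamma\mathcal N_\gamma$ with distribution $P$. Assumption (A): $P_\gamma(I)>1/2$, $P_\gamma(e)>0$ for all non-identity $e$ supported in $\gamma$. Local sparse: each $|\gamma|\le r_\Gamma$ and each qubit in at most $c_\Gamma$ supports, $r_\Gamma,c_\Gamma=\mathcal O(1)$. $\mathcal E_\gamma$ is the set of non-identity Paulis supported in $\gamma$, $\mathcal E_\Gamma$ their disjoint union ($e$ labeled by $\gamma_e$). Local eigenvalues $\lambda_e=\sum_fP_{\gamma_e}(f)[[f,e]]$; for $e\in\mathcal E_\gamma$, $\log\mu_e=-\frac{2}{4^{|\gamma|}}\sum_{f\in\mathcal E_\gamma}[[f,e]]\log\lambda_f$; for a syndrome class $C$, $\log\nu_C=\sum_{e\in C}\log\mu_e$. qLDPC code: measured subgroup $\mathcal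 M=\langle M_1,\dots,M_m\rangle$ of the stabilizer group, each generator of weight $\le r_s$, each qubit in $\le c_s$ generators, $r_s,c_s=\mathcal O(1)$. Syndrome classes partition $\mathcal E_\Gamma$ by equality of syndromes $(\langle e,M_i\rangle)_i$; $\mathcal C$ is the set of classes, $\mathcal C^*$ the nontrivial ones, $J(C)$ the set of violated generator indices. One sample: prepare a codeword, apply $\mathcal N_\Gamma$, perfectly measure $M_1,\dots,M_m$; the empirical mean over $N$ i.i.d. samples of the product of outcomes of $\{M_i\}_{i\in S}$ estimates $\Lambda(\prod_{i\in S}M_i)=\sum_eP(e)[[e,\prod_{i\in S}M_i]]$. Recursive estimator: with $Y_S$ the log of that empirical estimate, $X_C=-\sum_{C'\in\mathcal C,J(C')\supsetneq J(C)}X_{C'}+2^{-(|J(C)|-1)}\sum_{S\subseteq J(C)}(-1)^{|S|-1}Y_S$ (computed recursively), and $X_C$ is the estimate of $\log\nu_C$. *)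

theory Defs
  imports "HOL-Probability.Probability"
begin

text \<open>n-qubit Paulis without phases: qubit j carries (x_j, z_j); I=(F,F), X=(T,F), Z=(F,T), Y=(T,T).
  Qubits are indexed 0..n-1; an n-qubit Pauli is the identity outside {..<n}.\<close>
type_synonym pauli = "nat \<Rightarrow> bool \<times> bool"

definition Iall :: pauli where "Iall = (\<lambda>_. (False, False))"

definition supported_on :: "pauli \<Rightarrow> nat set \<Rightarrow> bool" where
  "supported_on p A \<longleftrightarrow> (\<forall>j. j \<notin> A \<longrightarrow> p j = (False, False))"

definition paulis_on :: "nat set \<Rightarrow> pauli set" where
  "paulis_on A = {p. supported_on p A}"

definition nontriv_on :: "nat set \<Rightarrow> pauli set" where
  "nontriv_on A = paulis_on A - {Iall}"

definition weight :: "pauli \<Rightarrow> nat" where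
  "weight p = card {j. p j \<noteq> (False, False)}"

definition pprod :: "'a set \<Rightarrow> ('a \<Rightarrow> pauli) \<Rightarrow> pauli" where
  "pprod A f = (\<lambda>j. (odd (card {a\<in>A. fst (f a j)}), odd (card {a\<in>A. snd (f a j)})))"

text \<open>symplectic form <A,B> in {0,1} (0 iff commute) and [[A,B]] = +-1\<close>
definition symp :: "nat \<Rightarrow> pauli \<Rightarrow> pauli \<Rightarrow> nat" where
  "symp n a b = card {j\<in>{..<n}. (fst (a j) \<and> snd (b j)) \<noteq> (snd (a j) \<and> fst (b j))} mod 2"

definition comm :: "nat \<Rightarrow> pauli \<Rightarrow> pauli \<Rightarrow> real" where
  "comm n a b = (-1) ^ symp n a b"

text \<open>Channel data: supports indexed by g \<in> Gam with support supp g, local distributions Pg g.\<close>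

definition loclam :: "nat \<Rightarrow> (nat \<Rightarrow> nat set) \<Rightarrow> (nat \<Rightarrow> pauli pmf) \<Rightarrow> nat \<Rightarrow> pauli \<Rightarrow> real" where
  "loclam n supp Pg g f = (\<Sum>h\<in>paulis_on (supp g). pmf (Pg g) h * comm n h f)"

definition logmu :: "nat \<Rightarrow> (nat \<Rightarrow> nat set) \<Rightarrow> (nat \<Rightarrow> pauli pmf) \<Rightarrow> nat \<Rightarrow> pauli \<Rightarrow> real" where
  "logmu n supp Pg g e =
     - (2 / 4 ^ card (supp g)) * (\<Sum>f\<in>nontriv_on (supp g). comm n f e * ln (loclam n supp Pg g f))"

definition EG :: "nat set \<Rightarrow> (nat \<Rightarrow> nat set) \<Rightarrow> (nat \<times> pauli) set" where
  "EG Gam supp = Sigma Gam (\<lambda>g. nontriv_on (supp g))"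

definition Ptot :: "nat set \<Rightarrow> (nat \<Rightarrow> pauli pmf) \<Rightarrow> pauli pmf" where
  "Ptot Gam Pg = map_pmf (\<lambda>f. pprod Gam f) (Pi_pmf Gam Iall Pg)"

definition synd :: "nat \<Rightarrow> nat \<Rightarrow> (nat \<Rightarrow> pauli) \<Rightarrow> pauli \<Rightarrow> nat set" where
  "synd n m M e = {i\<in>{..<m}. symp n e (M i) = 1}"

text \<open>the set of syndromes J(C) of the classes C in \<C>; a class is identified with its syndrome\<close>
definition class_synds :: "nat \<Rightarrow> nat \<Rightarrow> (nat \<Rightarrow> pauli) \<Rightarrow> nat set \<Rightarrow> (nat \<Rightarrow> nat set) \<Rightarrow> nat set set" where
  "class_synds n m M Gam supp = (\<lambda>x. synd n m M (snd x)) ` EG Gam supp"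

definition synd_class :: "nat \<Rightarrow> nat \<Rightarrow> (nat \<Rightarrow> pauli) \<Rightarrow> nat set \<Rightarrow> (nat \<Rightarrow> nat set) \<Rightarrow> nat set \<Rightarrow> (nat \<times> pauli) set" where
  "synd_class n m M Gam supp J = {x\<in>EG Gam supp. synd n m M (snd x) = J}"

definition lognu :: "nat \<Rightarrow> nat \<Rightarrow> (nat \<Rightarrow> pauli) \<Rightarrow> nat set \<Rightarrow> (nat \<Rightarrow> nat set) \<Rightarrow> (nat \<Rightarrow> pauli pmf) \<Rightarrow> nat set \<Rightarrow> real" where
  "lognu n m M Gam supp Pg J = (\<Sum>x\<in>synd_class n m M Gam supp J. logmu n supp Pg (fst x) (snd x))"

text \<open>Y_S: log of the empirical mean, over samples omega 0..N-1 (errors), of the product of the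
  outcomes of {M_i}_{i in S}, which equals [[e, prod_{i in S} M_i]]\<close>
definition Yemp :: "nat \<Rightarrow> (nat \<Rightarrow> pauli) \<Rightarrow> nat \<Rightarrow> (nat \<Rightarrow> pauli) \<Rightarrow> nat set \<Rightarrow> real" where
  "Yemp n M N omega S = ln ((\<Sum>k<N. comm n (omega k) (pprod S M)) / real N)"

definition Xbase :: "(nat set \<Rightarrow> real) \<Rightarrow> nat set \<Rightarrow> real" where
  "Xbase Y J = 2 powr (- (real (card J) - 1)) * (\<Sum>S\<in>Pow J. (-1) ^ (card S + 1) * Y S)"

fun Xrec :: "nat \<Rightarrow> (nat set \<Rightarrow> real) \<Rightarrow> nat set set \<Rightarrow> nat set \<Rightarrow> real" where
  "Xrec 0 Y Js J = Xbase Y J"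
| "Xrec (Suc k) Y Js J = - (\<Sum>J'\<in>{J'\<in>Js. J \<subset> J'}. Xrec k Y Js J') + Xbase Y J"

text \<open>fuel m suffices since all syndromes are subsets of {..<m}\<close>
definition Xest :: "nat \<Rightarrow> (nat set \<Rightarrow> real) \<Rightarrow> nat set set \<Rightarrow> nat set \<Rightarrow> real" where
  "Xest m Y Js J = Xrec m Y Js J"

end

theory Submission
  imports Defs
begin


lemma exp_prod_Pi:
  fixes f :: "'b \<Rightarrow> 'a \<Rightarrow> real"
  assumes "finite A" "\<And>x y. x \<in> A \<Longrightarrow> \<bar>f x y\<bar> \<le> 1"
  shows "measure_pmf.expectation (Pi_pmf A d p) (\<lambda>\<omega>. \<Prod>x\<in>A. f x (\<omega> x))
       = (\<Prod>x\<in>A. measure_pmf.expectation (p x) (f x))"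
proof -
  have ind: "prob_space.indep_vars (measure_pmf (Pi_pmf A d p)) (\<lambda>_. borel) (\<lambda>x \<omega>. f x (\<omega> x)) A"
    by (rule prob_space.indep_vars_compose2[OF prob_space_measure_pmf indep_vars_Pi_pmf[OF assms(1)]]) auto
  have int: "integrable (measure_pmf (Pi_pmf A d p)) (\<lambda>\<omega>. f x (\<omega> x))" if "x \<in> A" for x
    by (rule measure_pmf.integrable_const_bound[where B=1]) (use assms(2)[OF that] in auto)
  have "measure_pmf.expectation (Pi_pmf A d p) (\<lambda>\<omega>. \<Prod>x\<in>A. f x (\<omega> x))
     = (\<Prod>x\<in>A. measure_pmf.expectation (Pi_pmf A d p) (\<lambda>\<omega>. f x (\<omega> x)))"
    by (rule prob_space.indep_vars_lebesgue_integral[OF prob_space_measure_pmf assms(1) ind int])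
  also have "\<dots> = (\<Prod>x\<in>A. measure_pmf.expectation (p x) (f x))"
  proof (rule prod.cong[OF refl])
    fix x assume x: "x \<in> A"
    have "measure_pmf.expectation (Pi_pmf A d p) (\<lambda>\<omega>. f x (\<omega> x))
        = measure_pmf.expectation (map_pmf (\<lambda>\<omega>. \<omega> x) (Pi_pmf A d p)) (f x)" by simp
    also have "\<dots> = measure_pmf.expectation (p x) (f x)"
      using Pi_pmf_component[OF assms(1), of x d p] x by simp
    finally show "measure_pmf.expectation (Pi_pmf A d p) (\<lambda>\<omega>. f x (\<omega> x)) = measure_pmf.expectation (p x) (f x)" .
  qed
  finally show ?thesis .
qed

lemma hoeff:
  fixes D :: "'a pmf" and h :: "'a \<Rightarrow> real"
  assumes hb: "\<And>x. \<bar>h x\<bar> \<le> 1" and N: "N > 0" and t: "t \<ge> 0"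
  shows "measure_pmf.prob (Pi_pmf {..<N} d (\<lambda>_. D))
           {\<omega>. t \<le> \<bar>(\<Sum>k<N. h (\<omega> k)) / real N - measure_pmf.expectation D h\<bar>}
         \<le> 2 * exp (- real N * t\<^sup>2 / 2)"
proof -
  let ?M = "measure_pmf (Pi_pmf {..<N} d (\<lambda>_. D))"
  have ind: "prob_space.indep_vars ?M (\<lambda>_. borel) (\<lambda>k \<omega>. h (\<omega> k)) {..<N}"
    by (rule prob_space.indep_vars_compose2[OF prob_space_measure_pmf indep_vars_Pi_pmf]) auto
  interpret H: Hoeffding_ineq ?M "{..<N}" "\<lambda>k \<omega>. h (\<omega> k)" "\<lambda>_. -1" "\<lambda>_. 1"
     "(\<Sum>i\<in>{..<N}. measure_pmf.expectation (Pi_pmf {..<N} d (\<lambda>_. D)) (\<lambda>\<omega>. h (\<omega> i)))"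
  proof unfold_locales
    show "finite {..<N}" by simp
    show "prob_space.indep_vars ?M (\<lambda>_. borel) (\<lambda>k \<omega>. h (\<omega> k)) {..<N}" by (rule ind)
    fix i assume "i \<in> {..<N}"
    show "AE x in ?M. h (x i) \<in> {-1..1}" using hb by (auto simp: abs_le_iff)
  qed simp
  have ex: "measure_pmf.expectation (Pi_pmf {..<N} d (\<lambda>_. D)) (\<lambda>\<omega>. h (\<omega> i)) = measure_pmf.expectation D h"
    if "i < N" for i
  proof -
    have "measure_pmf.expectation (Pi_pmf {..<N} d (\<lambda>_. D)) (\<lambda>\<omega>. h (\<omega> i))
        = measure_pmf.expectation (map_pmf (\<lambda>\<omega>. \<omega> i) (Pi_pmf {..<N} d (\<lambda>_. D))) h" by simp
    also have "\<dots> = measure_pmf.expectation D h"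
      using Pi_pmf_component[of "{..<N}" i d "\<lambda>_. D"] that by simp
    finally show ?thesis .
  qed
  have mu: "(\<Sum>i\<in>{..<N}. measure_pmf.expectation (Pi_pmf {..<N} d (\<lambda>_. D)) (\<lambda>\<omega>. h (\<omega> i)))
     = real N * measure_pmf.expectation D h" using ex by simp
  have pos: "(\<Sum>i\<in>{..<N}. ((1::real) - -1)\<^sup>2) > 0" using N by simp
  have tN: "t * real N \<ge> 0" using t by simp
  note main = H.Hoeffding_ineq_abs_ge[OF tN pos]
  have eqset: "{\<omega>. t \<le> \<bar>(\<Sum>k<N. h (\<omega> k)) / real N - measure_pmf.expectation D h\<bar>}
     = {x \<in> space ?M. t * real N \<le> \<bar>(\<Sum>i\<in>{..<N}. h (x i)) - (\<Sum>i\<in>{..<N}. measure_pmf.expectation (Pi_pmf {..<N} d (\<lambda>_. D)) (\<lambda>\<omega>. h (\<omega> i)))\<bar>}"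
  proof -
    have "\<And>x::real. t \<le> \<bar>x / real N - measure_pmf.expectation D h\<bar> \<longleftrightarrow> t * real N \<le> \<bar>x - real N * measure_pmf.expectation D h\<bar>"
    proof -
      fix x :: real
      have "\<bar>x / real N - measure_pmf.expectation D h\<bar> = \<bar>x - real N * measure_pmf.expectation D h\<bar> / real N"
        using N by (simp add: field_simps)
      then show "t \<le> \<bar>x / real N - measure_pmf.expectation D h\<bar> \<longleftrightarrow> t * real N \<le> \<bar>x - real N * measure_pmf.expectation D h\<bar>"
        using N by (simp add: pos_le_divide_eq)
    qed
    then show ?thesis by (simp only: mu) simp
  qed
  have e: "-2 * (t * real N)\<^sup>2 / (\<Sum>i\<in>{..<N}. ((1::real) - -1)\<^sup>2) = - real N * t\<^sup>2 / 2"
    using N by (simp add: power2_eq_square field_simps)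
  show ?thesis unfolding eqset using main unfolding e .
qed



definition sc :: "bool \<times> bool \<Rightarrow> bool \<times> bool \<Rightarrow> real" where
  "sc x y = (if (fst x \<and> snd y) \<noteq> (snd x \<and> fst y) then -1 else 1)"

definition pxor :: "pauli \<Rightarrow> pauli \<Rightarrow> pauli" where
  "pxor a b = (\<lambda>j. (fst (a j) \<noteq> fst (b j), snd (a j) \<noteq> snd (b j)))"

lemma prod_sign: "finite A \<Longrightarrow> (\<Prod>j\<in>A. (if P j then -1 else 1::real)) = (-1) ^ card {j\<in>A. P j}"
proof (induction A rule: finite_induct)
  case (insert x F)
  have "{j\<in>insert x F. P j} = (if P x then insert x {j\<in>F. P j} else {j\<in>F. P j})" by auto
  then show ?case using insert by simp
qed simp

lemma neg1_mod: "(-1::real) ^ (k mod 2) = (-1) ^ k"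
  by (cases "even k") (auto simp: odd_iff_mod_2_eq_one)

lemma comm_prod: "comm n a b = (\<Prod>j<n. sc (a j) (b j))"
proof -
  have "comm n a b = (-1) ^ card {j\<in>{..<n}. (fst (a j) \<and> snd (b j)) \<noteq> (snd (a j) \<and> fst (b j))}"
    unfolding comm_def symp_def by (simp add: neg1_mod)
  also have "\<dots> = (\<Prod>j<n. sc (a j) (b j))"
    unfolding sc_def by (subst prod_sign) auto
  finally show ?thesis .
qed

lemma sc_sym: "sc x y = sc y x" unfolding sc_def by auto
lemma comm_sym: "comm n a b = comm n b a"
  unfolding comm_prod by (simp add: sc_sym)

lemma sc_xor: "sc x (fst y \<noteq> fst z, snd y \<noteq> snd z) = sc x y * sc x z"
  unfolding sc_def by (cases x; cases y; cases z) auto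

lemma comm_xor: "comm n h (pxor a b) = comm n h a * comm n h b"
  unfolding comm_prod pxor_def by (simp only: sc_xor prod.distrib)

lemma comm_Iall: "comm n h Iall = 1" "comm n Iall h = 1"
  unfolding comm_prod Iall_def sc_def by auto

lemma pprod_empty: "pprod {} M = Iall"
  unfolding pprod_def Iall_def by auto

lemma pprod_insert: "finite S \<Longrightarrow> i \<notin> S \<Longrightarrow> pprod (insert i S) M = pxor (M i) (pprod S M)"
proof -
  assume f: "finite S" and i: "i \<notin> S"
  have c: "card {a\<in>insert i S. P a} = (if P i then Suc (card {a\<in>S. P a}) else card {a\<in>S. P a})" for P
  proof -
    have "{a\<in>insert i S. P a} = (if P i then insert i {a\<in>S. P a} else {a\<in>S. P a})" by auto
    then show ?thesis using f i by simp
  qed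
  show ?thesis unfolding pprod_def pxor_def c by (rule ext) auto
qed

lemma comm_pprod: "finite S \<Longrightarrow> comm n h (pprod S M) = (\<Prod>i\<in>S. comm n h (M i))"
  by (induction S rule: finite_induct) (simp_all add: pprod_empty comm_Iall pprod_insert comm_xor)

lemma comm_pm1: "comm n a b = 1 \<or> comm n a b = -1"
  unfolding comm_def symp_def by (cases "even (card {j \<in> {..<n}. (fst (a j) \<and> snd (b j)) \<noteq> (snd (a j) \<and> fst (b j))})") auto

lemma symp_comm: "symp n a b = 1 \<longleftrightarrow> comm n a b = -1"
  unfolding comm_def symp_def by (cases "even (card {j \<in> {..<n}. (fst (a j) \<and> snd (b j)) \<noteq> (snd (a j) \<and> fst (b j))})") (auto simp: odd_iff_mod_2_eq_one) 

lemma abs_comm: "\<bar>comm n a b\<bar> = 1" using comm_pm1[of n a b] by auto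

lemma sc_triv: "sc (False, False) y = 1" "sc y (False,False) = 1" unfolding sc_def by auto

lemma comm_local:
  assumes "supported_on a A" "\<And>j. j \<in> A \<Longrightarrow> b j = b' j"
  shows "comm n a b = comm n a b'"
  unfolding comm_prod
proof (rule prod.cong[OF refl])
  fix j show "sc (a j) (b j) = sc (a j) (b' j)"
    using assms unfolding supported_on_def by (cases "j \<in> A") (auto simp: sc_triv)
qed

lemma paulis_on_bij:
  "bij_betw (\<lambda>p. restrict p A) (paulis_on A) (PiE A (\<lambda>_. UNIV))"
proof (rule bij_betw_byWitness[where f' = "\<lambda>q j. if j \<in> A then q j else (False, False)"])
  show "\<forall>a\<in>paulis_on A. (\<lambda>j. if j \<in> A then restrict a A j else (False, False)) = a"
    unfolding paulis_on_def supported_on_def restrict_def by (auto simp: fun_eq_iff)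
  show "\<forall>a'\<in>PiE A (\<lambda>_. UNIV). restrict (\<lambda>j. if j \<in> A then a' j else (False, False)) A = a'"
    unfolding restrict_def PiE_def extensional_def by (auto simp: fun_eq_iff)
  show "(\<lambda>p. restrict p A) ` paulis_on A \<subseteq> PiE A (\<lambda>_. UNIV)" by auto
  show "(\<lambda>q j. if j \<in> A then q j else (False, False)) ` PiE A (\<lambda>_. UNIV) \<subseteq> paulis_on A"
    unfolding paulis_on_def supported_on_def by auto
qed

lemma card_paulis_on: "finite A \<Longrightarrow> card (paulis_on A) = 4 ^ card A"
proof -
  assume f: "finite A"
  have "card (paulis_on A) = card (PiE A (\<lambda>_. UNIV :: (bool \<times> bool) set))"
    using bij_betw_same_card[OF paulis_on_bij] .
  also have "\<dots> = (\<Prod>i\<in>A. card (UNIV :: (bool \<times> bool) set))" using f by (rule card_PiE)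
  also have "card (UNIV :: (bool \<times> bool) set) = 4"
    by (simp add: UNIV_Times_UNIV[symmetric] card_cartesian_product card_UNIV_bool del: UNIV_Times_UNIV)
  also have "(\<Prod>i\<in>A. (4::nat)) = 4 ^ card A" by simp
  finally show ?thesis .
qed

lemma finite_paulis_on: "finite A \<Longrightarrow> finite (paulis_on A)"
  using bij_betw_finite[OF paulis_on_bij[of A]] finite_PiE[of A "\<lambda>_. UNIV :: (bool \<times> bool) set"] by simp

lemma Iall_paulis: "Iall \<in> paulis_on A" unfolding paulis_on_def supported_on_def Iall_def by auto

lemma char_sum:
  assumes f: "finite A" and An: "A \<subseteq> {..<n}"
  shows "(\<Sum>e\<in>paulis_on A. comm n h e) = (if \<forall>j\<in>A. h j = (False, False) then real (card (paulis_on A)) else 0)"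
proof (cases "\<forall>j\<in>A. h j = (False, False)")
  case True
  have "comm n h e = 1" if "e \<in> paulis_on A" for e
  proof -
    have "sc (h j) (e j) = 1" for j
    proof (cases "j \<in> A")
      case True2: True
      then show ?thesis using True by (simp add: sc_triv)
    next
      case False
      then have "e j = (False, False)" using that unfolding paulis_on_def supported_on_def by blast
      then show ?thesis by (simp add: sc_triv)
    qed
    then show ?thesis unfolding comm_prod by simp
  qed
  then show ?thesis using True by simp
next
  case False
  then obtain j0 where j0: "j0 \<in> A" "h j0 \<noteq> (False, False)" by auto
  define t :: pauli where "t = (\<lambda>j. if j = j0 then (\<not> fst (h j0), fst (h j0)) else (False, False))"
  have j0n: "j0 < n" using j0 An by auto
  have "comm n h t = (\<Prod>j<n. if j = j0 then sc (h j0) (t j0) else 1)"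
    unfolding comm_prod by (rule prod.cong) (simp_all add: t_def sc_triv)
  also have "\<dots> = sc (h j0) (t j0)" using j0n by (simp add: prod.delta)
  also have "\<dots> = -1" using j0(2) unfolding t_def sc_def by (cases "h j0") auto
  finally have ht: "comm n h t = -1" .
  have tA: "t \<in> paulis_on A" unfolding paulis_on_def supported_on_def t_def using j0 by auto
  have xx: "pxor (pxor e t) t = e" for e unfolding pxor_def by (auto simp: fun_eq_iff prod_eq_iff)
  have cl: "pxor e t \<in> paulis_on A" if "e \<in> paulis_on A" for e
    using that tA unfolding paulis_on_def supported_on_def pxor_def by auto
  have "(\<Sum>e\<in>paulis_on A. comm n h e) = (\<Sum>e\<in>paulis_on A. comm n h (pxor e t))"
    by (rule sum.reindex_bij_witness[where i = "\<lambda>e. pxor e t" and j = "\<lambda>e. pxor e t"])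
       (simp_all only: xx cl)
  also have "\<dots> = - (\<Sum>e\<in>paulis_on A. comm n h e)"
    by (simp add: comm_xor ht sum_negf)
  finally show ?thesis using False by auto
qed



lemma loclam_Iall:
  assumes "finite (supp g)" "set_pmf (Pg g) \<subseteq> paulis_on (supp g)"
  shows "loclam n supp Pg g Iall = 1"
  unfolding loclam_def comm_Iall using sum_pmf_eq_1[OF finite_paulis_on[OF assms(1)] assms(2)] by simp

lemma comm_xor_left: "comm n (pxor a b) e = comm n a e * comm n b e"
  using comm_xor[of n e a b] comm_sym by metis

lemma nontriv_ex: "f \<in> nontriv_on A \<Longrightarrow> \<exists>j\<in>A. f j \<noteq> (False, False)"
  unfolding nontriv_on_def paulis_on_def supported_on_def Iall_def by (auto simp: fun_eq_iff)

lemma fourier: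
  assumes fin: "finite (supp g)" and An: "supp g \<subseteq> {..<n}"
    and sp: "set_pmf (Pg g) \<subseteq> paulis_on (supp g)" and f: "f \<in> paulis_on (supp g)"
  shows "(\<Sum>e\<in>nontriv_on (supp g). logmu n supp Pg g e * ((1 - comm n e f) / 2))
         = ln (loclam n supp Pg g f)"
proof -
  define A where "A = supp g"
  define c :: real where "c = 4 ^ card A"
  define L where "L = (\<lambda>f. ln (loclam n supp Pg g f))"
  define nt where "nt = nontriv_on A"
  have finA: "finite A" using fin A_def by simp
  have An': "A \<subseteq> {..<n}" using An A_def by simp
  have cP: "real (card (paulis_on A)) = c" unfolding c_def using card_paulis_on[OF finA] by simp
  have cpos: "c > 0" unfolding c_def by simp
  have fP: "finite (paulis_on A)" using finite_paulis_on[OF finA] .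
  have ntP: "nt = paulis_on A - {Iall}" unfolding nt_def nontriv_on_def ..
  have fnt: "finite nt" using fP ntP by simp
  have fA: "f \<in> paulis_on A" using f A_def by simp
  have inner: "(\<Sum>e\<in>nt. comm n f' e * (1 - comm n e f)) = (if f' = f then -c else 0)"
    if f': "f' \<in> nt" for f'
  proof -
    have "(\<Sum>e\<in>nt. comm n f' e * (1 - comm n e f)) = (\<Sum>e\<in>paulis_on A. comm n f' e * (1 - comm n e f))"
    proof -
      have "(\<Sum>e\<in>paulis_on A. comm n f' e * (1 - comm n e f)) = comm n f' Iall * (1 - comm n Iall f) + (\<Sum>e\<in>nt. comm n f' e * (1 - comm n e f))"
        using fP Iall_paulis[of A] ntP by (simp add: sum.remove)
      then show ?thesis by (simp add: comm_Iall)
    qed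
    also have "\<dots> = (\<Sum>e\<in>paulis_on A. comm n f' e) - (\<Sum>e\<in>paulis_on A. comm n (pxor f' f) e)"
      by (simp add: comm_xor_left algebra_simps sum_subtractf comm_sym[of n e f for e])
    also have "(\<Sum>e\<in>paulis_on A. comm n f' e) = 0"
      using char_sum[OF finA An', of f'] nontriv_ex[of f' A] f' nt_def by auto
    also have "(\<Sum>e\<in>paulis_on A. comm n (pxor f' f) e) = (if f' = f then c else 0)"
    proof -
      have iff: "(\<forall>j\<in>A. pxor f' f j = (False, False)) \<longleftrightarrow> f' = f"
      proof
        assume h: "\<forall>j\<in>A. pxor f' f j = (False, False)"
        have "f' j = f j" for j
        proof (cases "j \<in> A")
          case True then show ?thesis using h unfolding pxor_def by (auto simp: prod_eq_iff)
        next
          case False then show ?thesis using f' fA ntP unfolding paulis_on_def supported_on_def by auto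
        qed
        then show "f' = f" by auto
      qed (auto simp: pxor_def)
      show ?thesis using char_sum[OF finA An', of "pxor f' f"] iff cP by auto
    qed
    finally show ?thesis by simp
  qed
  have "(\<Sum>e\<in>nt. logmu n supp Pg g e * ((1 - comm n e f) / 2))
      = (\<Sum>e\<in>nt. \<Sum>f'\<in>nt. (- (1 / c)) * L f' * (comm n f' e * (1 - comm n e f)))"
  proof (rule sum.cong[OF refl])
    fix e
    have "logmu n supp Pg g e * ((1 - comm n e f) / 2)
        = (\<Sum>f'\<in>nt. (-(2/c)) * (comm n f' e * L f') * ((1 - comm n e f) / 2))"
      unfolding logmu_def by (simp only: sum_distrib_left sum_distrib_right L_def c_def A_def nt_def)
    also have "\<dots> = (\<Sum>f'\<in>nt. (- (1 / c)) * L f' * (comm n f' e * (1 - comm n e f)))"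
      using cpos by (intro sum.cong refl) (simp add: field_simps)
    finally show "logmu n supp Pg g e * ((1 - comm n e f) / 2)
        = (\<Sum>f'\<in>nt. (- (1 / c)) * L f' * (comm n f' e * (1 - comm n e f)))" .
  qed
  also have "\<dots> = (\<Sum>f'\<in>nt. (- (1 / c)) * L f' * (\<Sum>e\<in>nt. comm n f' e * (1 - comm n e f)))"
    by (subst sum.swap) (simp add: sum_distrib_left)
  also have "\<dots> = (\<Sum>f'\<in>nt. if f' = f then L f' else 0)"
    by (intro sum.cong refl) (use cpos inner in auto)
  also have "\<dots> = (if f \<in> nt then L f else 0)"
    using fnt by (simp add: sum.delta')
  also have "\<dots> = L f"
  proof -
    have "f \<notin> nt \<Longrightarrow> f = Iall" using fA ntP by auto
    then show ?thesis using loclam_Iall[of supp g Pg, OF fin sp] L_def by auto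
  qed
  finally show ?thesis unfolding nt_def A_def L_def .
qed

lemma fourier_gen:
  assumes fin: "finite (supp g)" and An: "supp g \<subseteq> {..<n}"
    and sp: "set_pmf (Pg g) \<subseteq> paulis_on (supp g)"
  shows "(\<Sum>e\<in>nontriv_on (supp g). logmu n supp Pg g e * ((1 - comm n e P) / 2))
         = ln (loclam n supp Pg g P)"
proof -
  define Pr :: pauli where "Pr = (\<lambda>j. if j \<in> supp g then P j else (False, False))"
  have Pr: "Pr \<in> paulis_on (supp g)" unfolding Pr_def paulis_on_def supported_on_def by auto
  have cl: "comm n h P = comm n h Pr" if "h \<in> paulis_on (supp g)" for h
    using that unfolding paulis_on_def by (intro comm_local[of h "supp g"]) (auto simp: Pr_def)
  have "loclam n supp Pg g P = loclam n supp Pg g Pr"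
    unfolding loclam_def by (intro sum.cong refl) (simp add: cl)
  moreover have "(\<Sum>e\<in>nontriv_on (supp g). logmu n supp Pg g e * ((1 - comm n e P) / 2))
     = (\<Sum>e\<in>nontriv_on (supp g). logmu n supp Pg g e * ((1 - comm n e Pr) / 2))"
    by (intro sum.cong refl) (simp add: cl nontriv_on_def)
  ultimately show ?thesis using fourier[of supp g n Pg Pr, OF fin An sp Pr] by simp
qed

lemma Lambda_prod:
  assumes fin: "finite Gam" and sp: "\<And>g. g \<in> Gam \<Longrightarrow> set_pmf (Pg g) \<subseteq> paulis_on (supp g)"
    and fs: "\<And>g. g \<in> Gam \<Longrightarrow> finite (supp g)"
  shows "measure_pmf.expectation (Ptot Gam Pg) (\<lambda>e. comm n e P) = (\<Prod>g\<in>Gam. loclam n supp Pg g P)"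
proof -
  have "measure_pmf.expectation (Ptot Gam Pg) (\<lambda>e. comm n e P)
      = measure_pmf.expectation (Pi_pmf Gam Iall Pg) (\<lambda>\<omega>. \<Prod>g\<in>Gam. (\<lambda>g v. comm n v P) g (\<omega> g))"
    unfolding Ptot_def integral_map_pmf
    by (simp add: comm_sym[of n _ P] comm_pprod[OF fin])
  also have "\<dots> = (\<Prod>g\<in>Gam. measure_pmf.expectation (Pg g) (\<lambda>v. comm n v P))"
    by (rule exp_prod_Pi[OF fin]) (simp add: abs_comm)
  also have "\<dots> = (\<Prod>g\<in>Gam. loclam n supp Pg g P)"
  proof (rule prod.cong[OF refl])
    fix g assume g: "g \<in> Gam"
    show "measure_pmf.expectation (Pg g) (\<lambda>v. comm n v P) = loclam n supp Pg g P"
      unfolding loclam_def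
      by (subst integral_measure_pmf_real[OF finite_paulis_on[OF fs[OF g]]]) (use sp[OF g] in \<open>auto simp: mult.commute\<close>)
  qed
  finally show ?thesis .
qed



lemma pow_sum_prod: "finite J \<Longrightarrow> (\<Sum>S\<in>Pow J. \<Prod>j\<in>S. a j) = (\<Prod>j\<in>J. a j + (1::real))"
  using prod_add[of J a "\<lambda>_. 1"] by simp

lemma comb_sign:
  assumes fJ: "finite J" and ne: "J \<noteq> {}"
  shows "(\<Sum>S\<in>Pow J. (-1) ^ (card S + 1) * ((1 - (-1) ^ card (S \<inter> T)) / 2))
       = (if J \<subseteq> T then 2 ^ (card J - 1) else (0::real))"
proof -
  have t: "(-1) ^ (card S + 1) * ((1 - (-1) ^ card (S \<inter> T)) / 2)
        = - (1/2) * (\<Prod>j\<in>S. (-1)) + (1/2) * (\<Prod>j\<in>S. (if j \<in> T then 1 else -1::real))"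
    if S: "S \<in> Pow J" for S
  proof -
    have fS: "finite S" using S fJ finite_subset by auto
    have a: "(\<Prod>j\<in>S. (-1::real)) = (-1) ^ card S" by simp
    have b: "(-1::real) ^ card (S \<inter> T) = (\<Prod>j\<in>S. (if j \<in> T then -1 else 1))"
      using prod_sign[OF fS, of "\<lambda>j. j \<in> T"] by (simp add: Int_def)
    have c: "(\<Prod>j\<in>S. (if j \<in> T then 1 else -1::real)) = (\<Prod>j\<in>S. (-1)) * (\<Prod>j\<in>S. (if j \<in> T then -1 else 1))"
      unfolding prod.distrib[symmetric] by (intro prod.cong) auto
    show ?thesis unfolding c b[symmetric] a by (simp add: field_simps)
  qed
  have "(\<Sum>S\<in>Pow J. (-1) ^ (card S + 1) * ((1 - (-1) ^ card (S \<inter> T)) / 2))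
      = - (1/2) * (\<Sum>S\<in>Pow J. \<Prod>j\<in>S. (-1)) + (1/2) * (\<Sum>S\<in>Pow J. \<Prod>j\<in>S. (if j \<in> T then 1 else -1::real))"
    by (subst sum.cong[OF refl t], assumption) (simp only: sum.distrib sum_distrib_left)
  also have "(\<Sum>S\<in>Pow J. \<Prod>j\<in>S. (-1::real)) = 0"
    using pow_sum_prod[OF fJ, of "\<lambda>_. -1"] fJ ne by (simp add: card_gt_0_iff)
  also have "(\<Sum>S\<in>Pow J. \<Prod>j\<in>S. (if j \<in> T then 1 else -1::real)) = (\<Prod>j\<in>J. (if j \<in> T then 2 else 0))"
    unfolding pow_sum_prod[OF fJ, of "\<lambda>j. if j \<in> T then 1 else -1"] by (intro prod.cong) auto
  also have "(\<Prod>j\<in>J. (if j \<in> T then 2 else 0::real)) = (if J \<subseteq> T then 2 ^ card J else 0)"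
  proof (cases "J \<subseteq> T")
    case True then have "(\<Prod>j\<in>J. (if j \<in> T then 2 else 0::real)) = (\<Prod>j\<in>J. 2)" by (intro prod.cong) auto
    then show ?thesis using True by simp
  next
    case False then obtain j where "j \<in> J" "j \<notin> T" by auto
    then show ?thesis using False fJ by (intro trans[OF prod_zero]) auto
  qed
  finally have fin: "(\<Sum>S\<in>Pow J. (-1) ^ (card S + 1) * ((1 - (-1) ^ card (S \<inter> T)) / 2))
      = - (1/2) * 0 + (1/2) * (if J \<subseteq> T then 2 ^ card J else (0::real))" .
  have "card J = Suc (card J - 1)" using fJ ne by (simp add: card_gt_0_iff)
  then have "(2::real) ^ card J = 2 * 2 ^ (card J - 1)" by (metis power_Suc)
  then show ?thesis unfolding fin by simp
qed

lemma Xbase_eval: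
  assumes fJ: "finite J" and ne: "J \<noteq> {}" and fX: "finite X"
    and Y: "\<And>S. S \<subseteq> J \<Longrightarrow> Y S = (\<Sum>x\<in>X. w x * ((1 - (-1) ^ card (S \<inter> T x)) / 2))"
  shows "Xbase Y J = (\<Sum>x\<in>{x\<in>X. J \<subseteq> T x}. w x)"
proof -
  have "(\<Sum>S\<in>Pow J. (-1) ^ (card S + 1) * Y S)
      = (\<Sum>S\<in>Pow J. \<Sum>x\<in>X. w x * ((-1) ^ (card S + 1) * ((1 - (-1) ^ card (S \<inter> T x)) / 2)))"
    by (intro sum.cong refl) (simp add: Y sum_distrib_left mult_ac)
  also have "\<dots> = (\<Sum>x\<in>X. w x * (\<Sum>S\<in>Pow J. (-1) ^ (card S + 1) * ((1 - (-1) ^ card (S \<inter> T x)) / 2)))"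
    by (subst sum.swap) (simp add: sum_distrib_left)
  also have "\<dots> = (\<Sum>x\<in>X. w x * (if J \<subseteq> T x then 2 ^ (card J - 1) else 0))"
    by (intro sum.cong refl arg_cong2[where f="(*)"] comb_sign[OF fJ ne])
  also have "\<dots> = 2 ^ (card J - 1) * (\<Sum>x\<in>{x\<in>X. J \<subseteq> T x}. w x)"
    using fX by (simp add: sum.inter_filter[symmetric] sum_distrib_left mult_ac if_distrib cong: if_cong)
  finally have e: "(\<Sum>S\<in>Pow J. (-1) ^ (card S + 1) * Y S) = 2 ^ (card J - 1) * (\<Sum>x\<in>{x\<in>X. J \<subseteq> T x}. w x)" .
  have k: "card J \<ge> 1" using fJ ne by (simp add: Suc_le_eq card_gt_0_iff)
  have p: "(2::real) powr (- (real (card J) - 1)) * 2 ^ (card J - 1) = 1"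
  proof -
    have "(2::real) ^ (card J - 1) = 2 powr (real (card J) - 1)"
      using k by (simp add: powr_realpow[symmetric] of_nat_diff)
    then show ?thesis by (simp add: powr_add[symmetric])
  qed
  show ?thesis unfolding Xbase_def e using p by (simp add: mult.assoc[symmetric])
qed

lemma Xrec_exact:
  assumes fJs: "finite Js" and sub: "\<And>y. y \<in> Js \<Longrightarrow> y \<subseteq> {..<m}"
    and XB: "\<And>J'. J' \<noteq> {} \<Longrightarrow> J' \<subseteq> {..<m} \<Longrightarrow> Xbase Y J' = (\<Sum>y\<in>{y\<in>Js. J' \<subseteq> y}. lg y)"
  shows "J' \<in> Js \<Longrightarrow> J' \<noteq> {} \<Longrightarrow> m \<le> k + card J' \<Longrightarrow> Xrec k Y Js J' = lg J'"
proof (induction k arbitrary: J')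
  case 0
  have "J' \<subseteq> {..<m}" using sub 0 by auto
  moreover have "card {..<m} \<le> card J'" using 0 by simp
  ultimately have "J' = {..<m}" using card_seteq[of "{..<m}" J'] by auto
  then have "{y\<in>Js. J' \<subseteq> y} = {J'}" using 0 sub by auto
  then show ?case using XB[of J'] 0 sub by simp
next
  case (Suc k)
  have J'm: "J' \<subseteq> {..<m}" using sub Suc by auto
  have fJ': "finite J'" using J'm finite_subset by auto
  have IH: "Xrec k Y Js y = lg y" if "y \<in> {y\<in>Js. J' \<subset> y}" for y
  proof -
    have "y \<subseteq> {..<m}" using that sub by auto
    then have "finite y" using finite_subset by auto
    then have "card J' < card y" using that psubset_card_mono by auto
    then show ?thesis using Suc.IH[of y] that Suc.prems by auto
  qed
  have split: "{y\<in>Js. J' \<subseteq> y} = insert J' {y\<in>Js. J' \<subset> y}" using Suc.prems by auto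
  have "Xbase Y J' = lg J' + (\<Sum>y\<in>{y\<in>Js. J' \<subset> y}. lg y)"
    unfolding XB[OF Suc.prems(2) J'm] split using fJs by (subst sum.insert) auto
  then show ?case using IH by simp
qed



lemma Xbase_diff: "Xbase Y1 J - Xbase Y2 J = Xbase (\<lambda>S. Y1 S - Y2 S) J"
  unfolding Xbase_def right_diff_distrib[symmetric] sum_subtractf[symmetric] by (simp add: right_diff_distrib)

lemma grow: "(b::real) \<ge> 0 \<Longrightarrow> 2 * b \<le> 2 * b * (real q + 1) ^ k"
proof -
  assume b: "b \<ge> 0"
  have "1 \<le> (real q + 1) ^ k" by (rule one_le_power) simp
  then have "2 * b * 1 \<le> 2 * b * (real q + 1) ^ k" using b by (intro mult_left_mono) auto
  then show ?thesis by simp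
qed

lemma Xrec_diff: "Xrec k Y1 Js J - Xrec k Y2 Js J = Xrec k (\<lambda>S. Y1 S - Y2 S) Js J"
proof (induction k arbitrary: J)
  case 0 then show ?case by (simp add: Xbase_diff)
next
  case (Suc k)
  have "Xrec (Suc k) Y1 Js J - Xrec (Suc k) Y2 Js J
     = - (\<Sum>J'\<in>{J'\<in>Js. J \<subset> J'}. Xrec k Y1 Js J' - Xrec k Y2 Js J') + (Xbase Y1 J - Xbase Y2 J)"
    by (simp add: sum_subtractf)
  then show ?case by (simp add: Suc.IH Xbase_diff)
qed

lemma Xbase_bound:
  assumes fJ: "finite J" and D: "\<And>S. S \<subseteq> J \<Longrightarrow> \<bar>D S\<bar> \<le> b"
  shows "\<bar>Xbase D J\<bar> \<le> 2 * b"
proof -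
  have b0: "b \<ge> 0" using D[of "{}"] by simp
  have "\<bar>\<Sum>S\<in>Pow J. (-1) ^ (card S + 1) * D S\<bar> \<le> (\<Sum>S\<in>Pow J. \<bar>(-1) ^ (card S + 1) * D S\<bar>)"
    by (rule sum_abs)
  also have "\<dots> \<le> (\<Sum>S\<in>Pow J. b)"
    by (intro sum_mono) (simp add: abs_mult D)
  also have "\<dots> = 2 ^ card J * b" using fJ by (simp add: card_Pow)
  finally have s: "\<bar>\<Sum>S\<in>Pow J. (-1) ^ (card S + 1) * D S\<bar> \<le> 2 ^ card J * b" .
  have p: "(2::real) powr (- (real (card J) - 1)) * 2 ^ card J = 2"
  proof -
    have "(2::real) ^ card J = 2 powr (real (card J))"
      by (simp add: powr_realpow)
    then show ?thesis by (simp add: powr_add[symmetric])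
  qed
  have "\<bar>Xbase D J\<bar> = 2 powr (- (real (card J) - 1)) * \<bar>\<Sum>S\<in>Pow J. (-1) ^ (card S + 1) * D S\<bar>"
    unfolding Xbase_def by (simp add: abs_mult)
  also have "\<dots> \<le> 2 powr (- (real (card J) - 1)) * (2 ^ card J * b)"
    by (intro mult_left_mono s) simp
  also have "\<dots> = 2 * b" using p by (simp add: mult.assoc[symmetric])
  finally show ?thesis .
qed

lemma Xrec_bound:
  assumes fJs: "finite Js"
    and q: "card {y\<in>Js. J \<subseteq> y} \<le> q"
    and s: "\<And>y. y \<in> Js \<Longrightarrow> J \<subseteq> y \<Longrightarrow> finite y \<and> card y \<le> s"
    and D: "\<And>y S. y \<in> Js \<Longrightarrow> J \<subseteq> y \<Longrightarrow> S \<subseteq> y \<Longrightarrow> \<bar>D S\<bar> \<le> b"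
  shows "J' \<in> Js \<Longrightarrow> J \<subseteq> J' \<Longrightarrow> \<bar>Xrec k D Js J'\<bar> \<le> 2 * b * (real q + 1) ^ (s - card J')"
proof (induction k arbitrary: J')
  case 0
  have b0: "b \<ge> 0" using D[of J' "{}"] 0 by fastforce
  have "\<bar>Xbase D J'\<bar> \<le> 2 * b" using s[of J'] 0 by (intro Xbase_bound) (auto intro: D[of J'])
  also have "\<dots> \<le> 2 * b * (real q + 1) ^ (s - card J')" using b0 by (rule grow)
  finally show ?case by simp
next
  case (Suc k)
  have b0: "b \<ge> 0" using D[of J' "{}"] Suc by fastforce
  define R where "R = {y\<in>Js. J' \<subset> y}"
  have fR: "finite R" using fJs R_def by simp
  have cR: "card R \<le> q"
  proof -
    have "R \<subseteq> {y\<in>Js. J \<subseteq> y}" using Suc.prems R_def by auto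
    then have "card R \<le> card {y\<in>Js. J \<subseteq> y}" using fJs by (intro card_mono) auto
    then show ?thesis using q by simp
  qed
  have base: "\<bar>Xbase D J'\<bar> \<le> 2 * b" using s[of J'] Suc.prems by (intro Xbase_bound) (auto intro: D[of J'])
  show ?case
  proof (cases "R = {}")
    case True
    have e: "{J''\<in>Js. J' \<subset> J''} = {}" using True R_def by simp
    have "\<bar>Xrec (Suc k) D Js J'\<bar> = \<bar>Xbase D J'\<bar>" by (simp only: Xrec.simps e) simp
    also have "\<dots> \<le> 2 * b" by (rule base)
    also have "\<dots> \<le> 2 * b * (real q + 1) ^ (s - card J')" using b0 by (rule grow)
    finally show ?thesis .
  next
    case False
    then obtain y0 where y0: "y0 \<in> R" by auto
    have "card J' < card y0" using y0 R_def s[of y0] Suc.prems by (auto intro: psubset_card_mono)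
    moreover have "card y0 \<le> s" using y0 R_def s[of y0] Suc.prems by auto
    ultimately obtain t where t: "s - card J' = Suc t" by (metis Suc_diff_Suc order_less_le_trans)
    have each: "\<bar>Xrec k D Js y\<bar> \<le> 2 * b * (real q + 1) ^ t" if y: "y \<in> R" for y
    proof -
      have yJ: "y \<in> Js" "J \<subseteq> y" using y R_def Suc.prems by auto
      have "card J' < card y" using y R_def s[of y] Suc.prems by (auto intro: psubset_card_mono)
      moreover have "card y \<le> s" using yJ s by auto
      ultimately have "s - card y \<le> t" using t by simp
      then have "(real q + 1) ^ (s - card y) \<le> (real q + 1) ^ t" by (intro power_increasing) auto
      then have "2 * b * (real q + 1) ^ (s - card y) \<le> 2 * b * (real q + 1) ^ t"
        using b0 by (intro mult_left_mono) auto
      then show ?thesis using Suc.IH[OF yJ] by linarith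
    qed
    have "\<bar>Xrec (Suc k) D Js J'\<bar> \<le> \<bar>\<Sum>y\<in>R. Xrec k D Js y\<bar> + \<bar>Xbase D J'\<bar>"
      unfolding R_def by simp
    also have "\<bar>\<Sum>y\<in>R. Xrec k D Js y\<bar> \<le> (\<Sum>y\<in>R. 2 * b * (real q + 1) ^ t)"
      by (rule order_trans[OF sum_abs sum_mono]) (use each in auto)
    also have "\<dots> = real (card R) * (2 * b * (real q + 1) ^ t)" by simp
    also have "\<dots> \<le> real q * (2 * b * (real q + 1) ^ t)"
      using cR b0 by (intro mult_right_mono) auto
    finally have "\<bar>Xrec (Suc k) D Js J'\<bar> \<le> real q * (2 * b * (real q + 1) ^ t) + 2 * b" using base by linarith
    also have "\<dots> \<le> real q * (2 * b * (real q + 1) ^ t) + 2 * b * (real q + 1) ^ t"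
      using grow[OF b0, of q t] by simp
    also have "\<dots> = 2 * b * (real q + 1) ^ (s - card J')" unfolding t by (simp add: algebra_simps)
    finally show ?thesis .
  qed
qed



lemma comm_neg_ex: "comm n a b = -1 \<Longrightarrow> \<exists>j<n. a j \<noteq> (False, False) \<and> b j \<noteq> (False, False)"
proof (rule ccontr)
  assume c: "comm n a b = -1" and "\<not> (\<exists>j<n. a j \<noteq> (False, False) \<and> b j \<noteq> (False, False))"
  then have "\<forall>j<n. sc (a j) (b j) = 1" by (metis sc_triv)
  then have "comm n a b = 1" unfolding comm_prod by simp
  with c show False by simp
qed

lemma pprod_nontriv: "pprod S M j \<noteq> (False, False) \<Longrightarrow> \<exists>i\<in>S. M i j \<noteq> (False, False)"
proof (rule ccontr)
  assume a: "pprod S M j \<noteq> (False, False)" and "\<not> (\<exists>i\<in>S. M i j \<noteq> (False, False))"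
  then have "\<forall>i\<in>S. M i j = (False, False)" by blast
  then have e: "{a\<in>S. fst (M a j)} = {}" "{a\<in>S. snd (M a j)} = {}" by auto
  have "pprod S M j = (False, False)" unfolding pprod_def by (simp only: e) simp
  with a show False by simp
qed

lemma card_UN_bound:
  assumes "finite I" "\<And>i. i \<in> I \<Longrightarrow> card (A i) \<le> c"
  shows "card (\<Union>i\<in>I. A i) \<le> card I * c"
proof -
  have "card (\<Union>i\<in>I. A i) \<le> (\<Sum>i\<in>I. card (A i))" by (rule card_UN_le[OF assms(1)])
  also have "\<dots> \<le> (\<Sum>i\<in>I. c)" using assms(2) by (intro sum_mono) auto
  finally show ?thesis by simp
qed

lemma touchW:
  assumes fW: "finite W" and Wn: "W \<subseteq> {..<n}" and cG: "\<forall>j<n. card {g\<in>Gam. j \<in> supp g} \<le> cG"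
    and fG: "finite Gam"
  shows "card {g\<in>Gam. \<exists>j\<in>W. j \<in> supp g} \<le> card W * cG"
proof -
  have "{g\<in>Gam. \<exists>j\<in>W. j \<in> supp g} = (\<Union>j\<in>W. {g\<in>Gam. j \<in> supp g})" by auto
  also have "card \<dots> \<le> card W * cG" using Wn cG by (intro card_UN_bound[OF fW]) auto
  finally show ?thesis .
qed

lemma weight_set:
  assumes "supported_on p {..<n}"
  shows "finite {j. p j \<noteq> (False, False)}" "{j. p j \<noteq> (False, False)} \<subseteq> {..<n}"
  using assms unfolding supported_on_def by (auto intro: finite_subset[of _ "{..<n}"])

lemma supp_pprod:
  assumes fS: "finite S" and M: "\<forall>i\<in>S. supported_on (M i) {..<n} \<and> weight (M i) \<le> rs"
  shows "finite {j. pprod S M j \<noteq> (False, False)}" "{j. pprod S M j \<noteq> (False, False)} \<subseteq> {..<n}"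
        "card {j. pprod S M j \<noteq> (False, False)} \<le> card S * rs"
proof -
  have sub: "{j. pprod S M j \<noteq> (False, False)} \<subseteq> (\<Union>i\<in>S. {j. M i j \<noteq> (False, False)})"
    using pprod_nontriv by fastforce
  have fU: "finite (\<Union>i\<in>S. {j. M i j \<noteq> (False, False)})" using fS M weight_set by auto
  show "finite {j. pprod S M j \<noteq> (False, False)}" using finite_subset[OF sub fU] .
  show "{j. pprod S M j \<noteq> (False, False)} \<subseteq> {..<n}" using sub M weight_set(2) by blast
  have "card {j. pprod S M j \<noteq> (False, False)} \<le> card (\<Union>i\<in>S. {j. M i j \<noteq> (False, False)})"
    by (rule card_mono[OF fU sub])
  also have "\<dots> \<le> card S * rs" using M by (intro card_UN_bound[OF fS]) (auto simp: weight_def)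
  finally show "card {j. pprod S M j \<noteq> (False, False)} \<le> card S * rs" .
qed

lemma synd_bound:
  assumes e: "e \<in> nontriv_on A" and An: "A \<subseteq> {..<n}" and fA: "finite A"
    and cs: "\<forall>j<n. card {i\<in>{..<m}. M i j \<noteq> (False, False)} \<le> cs"
  shows "card (synd n m M e) \<le> card A * cs"
proof -
  have "synd n m M e \<subseteq> (\<Union>j\<in>A. {i\<in>{..<m}. M i j \<noteq> (False, False)})"
  proof
    fix i assume i: "i \<in> synd n m M e"
    then have "comm n e (M i) = -1" "i < m" unfolding synd_def using symp_comm by auto
    then obtain j where j: "j < n" "e j \<noteq> (False, False)" "M i j \<noteq> (False, False)" using comm_neg_ex by blast
    have "j \<in> A" using e j(2) unfolding nontriv_on_def paulis_on_def supported_on_def by auto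
    then show "i \<in> (\<Union>j\<in>A. {i\<in>{..<m}. M i j \<noteq> (False, False)})" using j \<open>i < m\<close> by auto
  qed
  then have "card (synd n m M e) \<le> card (\<Union>j\<in>A. {i\<in>{..<m}. M i j \<noteq> (False, False)})"
    by (intro card_mono) (auto simp: fA)
  also have "\<dots> \<le> card A * cs" using An cs by (intro card_UN_bound[OF fA]) auto
  finally show ?thesis .
qed

lemma loclam_lb:
  assumes fin: "finite (supp g)" and sp: "set_pmf (Pg g) \<subseteq> paulis_on (supp g)"
  shows "loclam n supp Pg g P \<ge> 2 * pmf (Pg g) Iall - 1"
proof -
  let ?A = "paulis_on (supp g)"
  have fA: "finite ?A" using finite_paulis_on[OF fin] .
  have s1: "(\<Sum>h\<in>?A. pmf (Pg g) h) = 1" using sum_pmf_eq_1[OF fA sp] .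
  have "loclam n supp Pg g P = pmf (Pg g) Iall * comm n Iall P + (\<Sum>h\<in>?A - {Iall}. pmf (Pg g) h * comm n h P)"
    unfolding loclam_def using fA Iall_paulis[of "supp g"] by (simp add: sum.remove)
  also have "(\<Sum>h\<in>?A - {Iall}. pmf (Pg g) h * comm n h P) \<ge> (\<Sum>h\<in>?A - {Iall}. - pmf (Pg g) h)"
  proof (intro sum_mono)
    fix h show "- pmf (Pg g) h \<le> pmf (Pg g) h * comm n h P"
      using comm_pm1[of n h P] pmf_nonneg[of "Pg g" h] by auto
  qed
  moreover have "(\<Sum>h\<in>?A - {Iall}. pmf (Pg g) h) = 1 - pmf (Pg g) Iall"
    using s1 fA Iall_paulis[of "supp g"] by (simp add: sum.remove)
  ultimately show ?thesis by (simp add: comm_Iall sum_negf)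
qed

lemma loclam_ub: 
  assumes fin: "finite (supp g)" and sp: "set_pmf (Pg g) \<subseteq> paulis_on (supp g)"
  shows "loclam n supp Pg g P \<le> 1"
proof -
  have "loclam n supp Pg g P \<le> (\<Sum>h\<in>paulis_on (supp g). pmf (Pg g) h)"
    unfolding loclam_def
  proof (intro sum_mono)
    fix h show "pmf (Pg g) h * comm n h P \<le> pmf (Pg g) h"
      using comm_pm1[of n h P] pmf_nonneg[of "Pg g" h] by auto
  qed
  also have "\<dots> = 1" using sum_pmf_eq_1[OF finite_paulis_on[OF fin] sp] .
  finally show ?thesis .
qed

lemma loclam_far:
  assumes fin: "finite (supp g)" and sp: "set_pmf (Pg g) \<subseteq> paulis_on (supp g)"
    and far: "\<forall>j\<in>supp g. P j = (False, False)"
  shows "loclam n supp Pg g P = 1"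
proof -
  have "comm n h P = comm n h Iall" if "h \<in> paulis_on (supp g)" for h
    using that far unfolding paulis_on_def by (intro comm_local[of h "supp g"]) (auto simp: Iall_def)
  then have "loclam n supp Pg g P = loclam n supp Pg g Iall"
    unfolding loclam_def by (intro sum.cong refl) simp
  then show ?thesis using loclam_Iall[of supp g Pg, OF fin sp] by simp
qed

lemma ln_close:
  fixes x L :: real
  assumes L: "L > 0" and x: "\<bar>x - L\<bar> \<le> L / 2"
  shows "\<bar>ln x - ln L\<bar> \<le> 2 * \<bar>x - L\<bar> / L"
proof -
  have xpos: "x \<ge> L / 2" using x abs_ge_minus_self[of "x - L"] by linarith
  then have x0: "x > 0" using L by simp
  have a: "ln x - ln L \<le> x / L - 1"
    using ln_le_minus_one[of "x / L"] x0 L by (simp add: ln_div)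
  have b: "ln L - ln x \<le> L / x - 1"
    using ln_le_minus_one[of "L / x"] x0 L by (simp add: ln_div)
  have a': "x / L - 1 \<le> 2 * \<bar>x - L\<bar> / L"
  proof -
    have "x / L - 1 = (x - L) / L" using L by (simp add: field_simps)
    also have "\<dots> \<le> 2 * \<bar>x - L\<bar> / L" using L by (intro divide_right_mono) (auto simp: abs_if)
    finally show ?thesis .
  qed
  have b': "L / x - 1 \<le> 2 * \<bar>x - L\<bar> / L"
  proof -
    have "L / x - 1 = (L - x) / x" using x0 by (simp add: field_simps)
    also have "\<dots> \<le> \<bar>x - L\<bar> / x" by (intro divide_right_mono) (use x0 in auto)
    also have "\<dots> \<le> \<bar>x - L\<bar> / (L / 2)" using xpos L by (intro divide_left_mono) auto
    also have "\<dots> = 2 * \<bar>x - L\<bar> / L" by simp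
    finally show ?thesis .
  qed
  show ?thesis using a b a' b' by linarith
qed



lemma comm_pprod_synd:
  assumes S: "S \<subseteq> {..<m}"
  shows "comm n e (pprod S M) = (-1) ^ card (S \<inter> synd n m M e)"
proof -
  have fS: "finite S" using S finite_subset by auto
  have "comm n e (pprod S M) = (\<Prod>i\<in>S. comm n e (M i))" by (rule comm_pprod[OF fS])
  also have "\<dots> = (\<Prod>i\<in>S. if i \<in> synd n m M e then -1 else 1)"
  proof (rule prod.cong[OF refl])
    fix i assume i: "i \<in> S"
    then have "i < m" using S by auto
    then show "comm n e (M i) = (if i \<in> synd n m M e then -1 else 1)"
      unfolding synd_def using symp_comm[of n e "M i"] comm_pm1[of n e "M i"] by auto
  qed
  also have "\<dots> = (-1) ^ card {i\<in>S. i \<in> synd n m M e}" by (rule prod_sign[OF fS])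
  also have "{i\<in>S. i \<in> synd n m M e} = S \<inter> synd n m M e" by auto
  finally show ?thesis .
qed

lemma finite_EG:
  assumes fG: "finite Gam" and sG: "\<forall>g\<in>Gam. supp g \<subseteq> {..<n}"
  shows "finite (EG Gam supp)"
proof -
  have "finite (nontriv_on (supp g))" if "g \<in> Gam" for g
    using that sG finite_paulis_on[of "supp g"] finite_subset[of "supp g" "{..<n}"]
    unfolding nontriv_on_def by auto
  then show ?thesis unfolding EG_def using fG by auto
qed

lemma ytrue_formula:
  assumes fG: "finite Gam" and sG: "\<forall>g\<in>Gam. supp g \<subseteq> {..<n}"
    and sp: "\<forall>g\<in>Gam. set_pmf (Pg g) \<subseteq> paulis_on (supp g)"
    and pos: "\<forall>g\<in>Gam. \<forall>P. loclam n supp Pg g P > 0" and S: "S \<subseteq> {..<m}"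
  shows "ln (measure_pmf.expectation (Ptot Gam Pg) (\<lambda>e. comm n e (pprod S M)))
       = (\<Sum>x\<in>EG Gam supp. logmu n supp Pg (fst x) (snd x) * ((1 - (-1) ^ card (S \<inter> synd n m M (snd x))) / 2))"
proof -
  have fs: "finite (supp g)" if "g \<in> Gam" for g using that sG finite_subset[of "supp g" "{..<n}"] by auto
  have fnt: "finite (nontriv_on (supp g))" if "g \<in> Gam" for g
    using fs[OF that] finite_paulis_on unfolding nontriv_on_def by auto
  let ?P = "pprod S M"
  have "ln (measure_pmf.expectation (Ptot Gam Pg) (\<lambda>e. comm n e ?P)) = ln (\<Prod>g\<in>Gam. loclam n supp Pg g ?P)"
    using Lambda_prod[OF fG, of Pg supp n ?P] sp fs by simp
  also have "\<dots> = (\<Sum>g\<in>Gam. ln (loclam n supp Pg g ?P))"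
    using pos by (intro ln_prod fG) (metis less_irrefl)
  also have "\<dots> = (\<Sum>g\<in>Gam. \<Sum>e\<in>nontriv_on (supp g). logmu n supp Pg g e * ((1 - comm n e ?P) / 2))"
    using fourier_gen fs sG sp by (intro sum.cong refl) (simp add: fourier_gen)
  also have "\<dots> = (\<Sum>x\<in>EG Gam supp. logmu n supp Pg (fst x) (snd x) * ((1 - comm n (snd x) ?P) / 2))"
    unfolding EG_def using fG fnt by (subst sum.Sigma) (auto simp: case_prod_beta)
  also have "\<dots> = (\<Sum>x\<in>EG Gam supp. logmu n supp Pg (fst x) (snd x) * ((1 - (-1) ^ card (S \<inter> synd n m M (snd x))) / 2))"
    using comm_pprod_synd[OF S] by simp
  finally show ?thesis .
qed

lemma exact:
  assumes fG: "finite Gam" and sG: "\<forall>g\<in>Gam. supp g \<subseteq> {..<n}"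
    and sp: "\<forall>g\<in>Gam. set_pmf (Pg g) \<subseteq> paulis_on (supp g)"
    and pos: "\<forall>g\<in>Gam. \<forall>P. loclam n supp Pg g P > 0"
    and J: "J \<in> class_synds n m M Gam supp" "J \<noteq> {}"
  shows "Xest m (\<lambda>S. ln (measure_pmf.expectation (Ptot Gam Pg) (\<lambda>e. comm n e (pprod S M))))
            (class_synds n m M Gam supp) J = lognu n m M Gam supp Pg J"
proof -
  let ?Y = "\<lambda>S. ln (measure_pmf.expectation (Ptot Gam Pg) (\<lambda>e. comm n e (pprod S M)))"
  let ?Js = "class_synds n m M Gam supp"
  let ?T = "\<lambda>x. synd n m M (snd x)"
  let ?w = "\<lambda>x. logmu n supp Pg (fst x) (snd x)"
  have fEG: "finite (EG Gam supp)" by (rule finite_EG[OF fG sG])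
  have fJs: "finite ?Js" unfolding class_synds_def using fEG by simp
  have sub: "y \<subseteq> {..<m}" if "y \<in> ?Js" for y using that unfolding class_synds_def synd_def by auto
  have XB: "Xbase ?Y J' = (\<Sum>y\<in>{y\<in>?Js. J' \<subseteq> y}. lognu n m M Gam supp Pg y)"
    if ne: "J' \<noteq> {}" and J'm: "J' \<subseteq> {..<m}" for J'
  proof -
    have fJ': "finite J'" using J'm finite_subset by auto
    have "Xbase ?Y J' = (\<Sum>x\<in>{x\<in>EG Gam supp. J' \<subseteq> ?T x}. ?w x)"
    proof (rule Xbase_eval[OF fJ' ne fEG])
      fix S assume "S \<subseteq> J'"
      then have "S \<subseteq> {..<m}" using J'm by auto
      then show "?Y S = (\<Sum>x\<in>EG Gam supp. ?w x * ((1 - (-1) ^ card (S \<inter> ?T x)) / 2))"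
        by (rule ytrue_formula[OF fG sG sp pos])
    qed
    also have "\<dots> = (\<Sum>y\<in>{y\<in>?Js. J' \<subseteq> y}. \<Sum>x\<in>{x. x \<in> {x\<in>EG Gam supp. J' \<subseteq> ?T x} \<and> ?T x = y}. ?w x)"
      by (rule sum.group[symmetric]) (use fEG fJs in \<open>auto simp: class_synds_def\<close>)
    also have "\<dots> = (\<Sum>y\<in>{y\<in>?Js. J' \<subseteq> y}. lognu n m M Gam supp Pg y)"
    proof (rule sum.cong[OF refl])
      fix y assume "y \<in> {y\<in>?Js. J' \<subseteq> y}"
      then have "{x. x \<in> {x\<in>EG Gam supp. J' \<subseteq> ?T x} \<and> ?T x = y} = synd_class n m M Gam supp y"
        unfolding synd_class_def by auto
      then show "(\<Sum>x\<in>{x. x \<in> {x\<in>EG Gam supp. J' \<subseteq> ?T x} \<and> ?T x = y}. ?w x) = lognu n m M Gam supp Pg y"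
        unfolding lognu_def by simp
    qed
    finally show ?thesis .
  qed
  show ?thesis unfolding Xest_def
    by (rule Xrec_exact[OF fJs sub XB]) (use J in auto)
qed



lemma Lam_lb:
  fixes \<eta> :: real and m :: nat and S :: "nat set" and M :: "nat \<Rightarrow> pauli"
  assumes fG: "finite Gam" and sG: "\<forall>g\<in>Gam. supp g \<subseteq> {..<n}"
    and sp: "\<forall>g\<in>Gam. set_pmf (Pg g) \<subseteq> paulis_on (supp g)"
    and eta: "\<forall>g\<in>Gam. pmf (Pg g) Iall \<ge> 1/2 + \<eta>" and eta0: "\<eta> > 0" and eta1: "2 * \<eta> \<le> 1"
    and cG: "\<forall>j<n. card {g\<in>Gam. j \<in> supp g} \<le> cG"
    and M: "\<forall>i<m. supported_on (M i) {..<n} \<and> weight (M i) \<le> rs"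
    and S: "S \<subseteq> {..<m}" "card S \<le> s0"
  shows "measure_pmf.expectation (Ptot Gam Pg) (\<lambda>e. comm n e (pprod S M)) \<ge> (2 * \<eta>) ^ (s0 * rs * cG)"
proof -
  let ?P = "pprod S M"
  define W where "W = {j. ?P j \<noteq> (False, False)}"
  define G1 where "G1 = {g\<in>Gam. \<exists>j\<in>W. j \<in> supp g}"
  have fs: "finite (supp g)" if "g \<in> Gam" for g using that sG finite_subset[of "supp g" "{..<n}"] by auto
  have fS: "finite S" using S(1) finite_subset[of S "{..<m}"] by auto
  have MS: "\<forall>i\<in>S. supported_on (M i) {..<n} \<and> weight (M i) \<le> rs" using M S by auto
  note sw = supp_pprod[OF fS MS]
  have cW: "card W \<le> s0 * rs" using sw(3) S(2) unfolding W_def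
    by (meson le_trans mult_le_mono1)
  have cG1: "card G1 \<le> s0 * rs * cG"
  proof -
    have "card G1 \<le> card W * cG" unfolding G1_def
      by (rule touchW) (use sw cG fG in \<open>auto simp: W_def\<close>)
    also have "\<dots> \<le> s0 * rs * cG" using cW by simp
    finally show ?thesis .
  qed
  have G1sub: "G1 \<subseteq> Gam" unfolding G1_def by auto
  have "measure_pmf.expectation (Ptot Gam Pg) (\<lambda>e. comm n e ?P) = (\<Prod>g\<in>Gam. loclam n supp Pg g ?P)"
    using Lambda_prod[OF fG, of Pg supp n ?P] sp fs by simp
  also have "\<dots> = (\<Prod>g\<in>Gam - G1. loclam n supp Pg g ?P) * (\<Prod>g\<in>G1. loclam n supp Pg g ?P)"
    by (rule prod.subset_diff[OF G1sub fG])
  also have "(\<Prod>g\<in>Gam - G1. loclam n supp Pg g ?P) = 1"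
  proof (rule prod.neutral, intro ballI)
    fix g assume g: "g \<in> Gam - G1"
    then have "\<forall>j\<in>supp g. ?P j = (False, False)" unfolding G1_def W_def by auto
    then show "loclam n supp Pg g ?P = 1" using loclam_far[of supp g Pg ?P n] fs sp g by auto
  qed
  also have "(\<Prod>g\<in>G1. loclam n supp Pg g ?P) \<ge> (\<Prod>g\<in>G1. 2 * \<eta>)"
  proof (rule prod_mono, intro ballI conjI)
    fix g assume g: "g \<in> G1"
    then have gG: "g \<in> Gam" using G1sub by auto
    show "0 \<le> 2 * \<eta>" using eta0 by simp
    show "2 * \<eta> \<le> loclam n supp Pg g ?P"
      using loclam_lb[of supp g Pg n ?P] fs[OF gG] sp eta gG by force
  qed
  moreover have "(\<Prod>g\<in>G1. 2 * \<eta>) = (2 * \<eta>) ^ card G1" by simp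
  moreover have "(2 * \<eta>) ^ (s0 * rs * cG) \<le> (2 * \<eta>) ^ card G1"
    by (rule power_decreasing[OF cG1]) (use eta0 eta1 in auto)
  ultimately show ?thesis by simp
qed

lemma R0_card:
  assumes fG: "finite Gam" and sG: "\<forall>g\<in>Gam. supp g \<subseteq> {..<n} \<and> card (supp g) \<le> rG"
    and cG: "\<forall>j<n. card {g\<in>Gam. j \<in> supp g} \<le> cG"
    and M: "\<forall>i<m. supported_on (M i) {..<n} \<and> weight (M i) \<le> rs"
    and i0: "i0 < m"
  shows "card {y\<in>class_synds n m M Gam supp. i0 \<in> y} \<le> rs * cG * 4 ^ rG"
proof -
  define W0 where "W0 = {j. M i0 j \<noteq> (False, False)}"
  define G2 where "G2 = {g\<in>Gam. \<exists>j\<in>W0. j \<in> supp g}"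
  have fs: "finite (supp g)" if "g \<in> Gam" for g using that sG finite_subset[of "supp g" "{..<n}"] by auto
  have fnt: "finite (nontriv_on (supp g))" if "g \<in> Gam" for g
    using fs[OF that] finite_paulis_on unfolding nontriv_on_def by auto
  have W0: "finite W0" "W0 \<subseteq> {..<n}" "card W0 \<le> rs" using weight_set[of "M i0" n] M i0
    unfolding W0_def weight_def by auto
  have cG2: "card G2 \<le> rs * cG"
  proof -
    have "card G2 \<le> card W0 * cG" unfolding G2_def using touchW[OF W0(1,2) cG fG] by simp
    also have "\<dots> \<le> rs * cG" using W0(3) by simp
    finally show ?thesis .
  qed
  have fG2: "finite G2" using fG G2_def by simp
  define X1 where "X1 = {x\<in>EG Gam supp. i0 \<in> synd n m M (snd x)}"
  have X1sub: "X1 \<subseteq> Sigma G2 (\<lambda>g. nontriv_on (supp g))"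
  proof
    fix x assume x: "x \<in> X1"
    obtain g e where xe: "x = (g, e)" by (cases x)
    have g: "g \<in> Gam" and e: "e \<in> nontriv_on (supp g)" using x xe unfolding X1_def EG_def by auto
    have "comm n e (M i0) = -1" using x xe unfolding X1_def synd_def using symp_comm by auto
    then obtain j where j: "j < n" "e j \<noteq> (False, False)" "M i0 j \<noteq> (False, False)" using comm_neg_ex by blast
    have "j \<in> supp g" using e j(2) unfolding nontriv_on_def paulis_on_def supported_on_def by auto
    then have "g \<in> G2" using g j(3) unfolding G2_def W0_def by auto
    then show "x \<in> Sigma G2 (\<lambda>g. nontriv_on (supp g))" using xe e by auto
  qed
  have G2sub: "G2 \<subseteq> Gam" unfolding G2_def by auto
  have cnt: "card (nontriv_on (supp g)) \<le> 4 ^ rG" if "g \<in> Gam" for g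
  proof -
    have "card (nontriv_on (supp g)) \<le> card (paulis_on (supp g))"
      unfolding nontriv_on_def by (rule card_mono) (use finite_paulis_on fs[OF that] in auto)
    also have "\<dots> = 4 ^ card (supp g)" using card_paulis_on fs[OF that] by simp
    also have "\<dots> \<le> 4 ^ rG" using sG that by (intro power_increasing) auto
    finally show ?thesis .
  qed
  have "card X1 \<le> card (Sigma G2 (\<lambda>g. nontriv_on (supp g)))"
    by (rule card_mono[OF _ X1sub]) (use fG2 fnt G2sub in auto)
  also have "\<dots> = (\<Sum>g\<in>G2. card (nontriv_on (supp g)))" using fG2 fnt G2sub by (intro card_SigmaI) auto
  also have "\<dots> \<le> (\<Sum>g\<in>G2. 4 ^ rG)" using cnt G2sub by (intro sum_mono) auto
  also have "\<dots> = card G2 * 4 ^ rG" by simp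
  also have "\<dots> \<le> rs * cG * 4 ^ rG" using cG2 by simp
  finally have cX1: "card X1 \<le> rs * cG * 4 ^ rG" .
  have fX1: "finite X1" using finite_subset[OF X1sub] fG2 fnt G2sub by auto
  have "{y\<in>class_synds n m M Gam supp. i0 \<in> y} \<subseteq> (\<lambda>x. synd n m M (snd x)) ` X1"
    unfolding class_synds_def X1_def by auto
  then have "card {y\<in>class_synds n m M Gam supp. i0 \<in> y} \<le> card ((\<lambda>x. synd n m M (snd x)) ` X1)"
    using fX1 by (intro card_mono) auto
  also have "\<dots> \<le> card X1" by (rule card_image_le[OF fX1])
  finally show ?thesis using cX1 by simp
qed



lemma exp_bound:
  fixes N :: nat and K c Ns \<epsilon> \<delta> t :: real
  assumes K: "K = 2 / c\<^sup>2 * (1 + ln (2 * Ns) / ln 2)" and c: "c > 0" and Ns: "Ns \<ge> 1"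
    and eps: "0 < \<epsilon>" and del: "0 < \<delta>" "\<delta> < 1/2" and t: "t = \<epsilon> * c"
    and NK: "real N \<ge> K / \<epsilon>\<^sup>2 * ln (1 / \<delta>)"
  shows "2 * Ns * exp (- real N * t\<^sup>2 / 2) \<le> \<delta>"
proof -
  define L where "L = ln (1 / \<delta>)"
  have L2: "L \<ge> ln 2" unfolding L_def using del by (intro ln_mono) (auto simp: field_simps)
  have ln2: "ln (2::real) > 0" by simp
  have lnNs: "ln (2 * Ns) \<ge> 0" using Ns by simp
  have "real N * t\<^sup>2 / 2 \<ge> K / \<epsilon>\<^sup>2 * L * t\<^sup>2 / 2"
    using NK unfolding L_def by (intro divide_right_mono mult_right_mono) auto
  also have "K / \<epsilon>\<^sup>2 * L * t\<^sup>2 / 2 = (1 + ln (2 * Ns) / ln 2) * L"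
    unfolding K t using c eps by (simp add: field_simps power2_eq_square)
  also have "(1 + ln (2 * Ns) / ln 2) * L = L + L * (ln (2 * Ns) / ln 2)" by (simp add: algebra_simps)
  also have "L * (ln (2 * Ns) / ln 2) \<ge> ln 2 * (ln (2 * Ns) / ln 2)"
    using L2 lnNs ln2 by (intro mult_right_mono) auto
  then have "L + L * (ln (2 * Ns) / ln 2) \<ge> L + ln (2 * Ns)" using ln2 by simp
  finally have A: "real N * t\<^sup>2 / 2 \<ge> L + ln (2 * Ns)" .
  have "exp (- real N * t\<^sup>2 / 2) \<le> exp (- (L + ln (2 * Ns)))" using A by simp
  also have "\<dots> = \<delta> / (2 * Ns)" unfolding L_def using del Ns
    by (simp add: exp_diff exp_minus ln_div field_simps)
  finally show ?thesis using Ns by (simp add: field_simps)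
qed



lemma main_bound:
  fixes rG cG rs cs :: nat and \<eta> K :: real and n m N :: nat and Gam :: "nat set"
    and supp :: "nat \<Rightarrow> nat set" and Pg :: "nat \<Rightarrow> pauli pmf" and M :: "nat \<Rightarrow> pauli"
    and J :: "nat set" and \<epsilon> \<delta> :: real
  assumes eta0: "\<eta> > 0"
  and Kdef: "K = 2 / ((2 * \<eta>) ^ (rG * cs * rs * cG) / (2 * (2 * (real (rs * cG * 4 ^ rG) + 1) ^ (rG * cs))))\<^sup>2
                 * (1 + ln (2 * (real (rs * cG * 4 ^ rG) * 2 ^ (rG * cs) + 1)) / ln 2)"
  and fG: "finite Gam"
  and sG: "\<forall>g\<in>Gam. supp g \<subseteq> {..<n} \<and> card (supp g) \<le> rG"
  and cG: "\<forall>j<n. card {g\<in>Gam. j \<in> supp g} \<le> cG"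
  and sp: "\<forall>g\<in>Gam. set_pmf (Pg g) \<subseteq> paulis_on (supp g)"
  and eta: "\<forall>g\<in>Gam. pmf (Pg g) Iall \<ge> 1/2 + \<eta>"
  and M: "\<forall>i<m. supported_on (M i) {..<n} \<and> weight (M i) \<le> rs"
  and cs: "\<forall>j<n. card {i\<in>{..<m}. M i j \<noteq> (False, False)} \<le> cs"
  and J: "J \<in> class_synds n m M Gam supp" "J \<noteq> {}"
  and eps: "0 < \<epsilon>" "\<epsilon> < 1" and del: "0 < \<delta>" "\<delta> < 1/2"
  and NK: "real N \<ge> K / \<epsilon>\<^sup>2 * ln (1 / \<delta>)"
  shows "measure_pmf.prob (Pi_pmf {..<N} Iall (\<lambda>_. Ptot Gam Pg))
          {\<omega>. \<bar>Xest m (Yemp n M N \<omega>) (class_synds n m M Gam supp) J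
                 - lognu n m M Gam supp Pg J\<bar> \<le> \<epsilon>} \<ge> 1 - \<delta>"
proof -
  define s0 where "s0 = rG * cs"
  define Q where "Q = rs * cG * 4 ^ rG"
  define lam0 :: real where "lam0 = (2 * \<eta>) ^ (s0 * rs * cG)"
  define C1 :: real where "C1 = 2 * (real Q + 1) ^ s0"
  define c where "c = lam0 / (2 * C1)"
  define Ns :: real where "Ns = real Q * 2 ^ s0 + 1"
  define t where "t = \<epsilon> * c"
  have K: "K = 2 / c\<^sup>2 * (1 + ln (2 * Ns) / ln 2)"
    unfolding Kdef c_def lam0_def C1_def Ns_def s0_def Q_def by (simp only: mult.assoc of_nat_mult)
  let ?Js = "class_synds n m M Gam supp"
  let ?Lam = "\<lambda>S. measure_pmf.expectation (Ptot Gam Pg) (\<lambda>e. comm n e (pprod S M))"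
  let ?Yt = "\<lambda>S. ln (?Lam S)"
  let ?PP = "Pi_pmf {..<N} Iall (\<lambda>_. Ptot Gam Pg)"
  let ?mean = "\<lambda>\<omega> S. (\<Sum>k<N. comm n (\<omega> k) (pprod S M)) / real N"
  have sG': "\<forall>g\<in>Gam. supp g \<subseteq> {..<n}" using sG by auto
  have fs: "finite (supp g)" if "g \<in> Gam" for g using that sG finite_subset[of "supp g" "{..<n}"] by auto
  obtain x0 where x0: "x0 \<in> EG Gam supp" using J(1) unfolding class_synds_def by auto
  then have g0: "fst x0 \<in> Gam" unfolding EG_def by auto
  have eta1: "2 * \<eta> \<le> 1" using eta g0 pmf_le_1[of "Pg (fst x0)" Iall] by force
  have pos: "\<forall>g\<in>Gam. \<forall>P. loclam n supp Pg g P > 0"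
  proof (intro ballI allI)
    fix g P assume g: "g \<in> Gam"
    have "loclam n supp Pg g P \<ge> 2 * pmf (Pg g) Iall - 1" using loclam_lb[of supp g Pg n P] fs[OF g] sp g by auto
    then show "loclam n supp Pg g P > 0" using eta g eta0 by force
  qed
  have fEG: "finite (EG Gam supp)" by (rule finite_EG[OF fG sG'])
  have fJs: "finite ?Js" unfolding class_synds_def using fEG by simp
  have Jsub: "y \<subseteq> {..<m}" if "y \<in> ?Js" for y using that unfolding class_synds_def synd_def by auto
  have Jcard: "card y \<le> s0" if yJ: "y \<in> ?Js" for y
  proof -
    obtain g e where ge: "g \<in> Gam" "e \<in> nontriv_on (supp g)" "y = synd n m M e"
      using yJ unfolding class_synds_def EG_def by auto
    have "card y \<le> card (supp g) * cs" using synd_bound[OF ge(2) _ fs[OF ge(1)] cs] sG ge by auto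
    also have "\<dots> \<le> rG * cs" using sG ge(1) by simp
    finally show ?thesis unfolding s0_def .
  qed
  define R0 where "R0 = {y\<in>?Js. J \<subseteq> y}"
  obtain i0 where i0: "i0 \<in> J" using J(2) by auto
  have i0m: "i0 < m" using Jsub[OF J(1)] i0 by auto
  have cR0: "card R0 \<le> Q"
  proof -
    have "R0 \<subseteq> {y\<in>?Js. i0 \<in> y}" unfolding R0_def using i0 by auto
    then have "card R0 \<le> card {y\<in>?Js. i0 \<in> y}" using fJs by (intro card_mono) auto
    also have "\<dots> \<le> Q" unfolding Q_def by (rule R0_card[OF fG sG cG M i0m])
    finally show ?thesis .
  qed
  have fR0: "finite R0" unfolding R0_def using fJs by simp
  define SS where "SS = (\<Union>y\<in>R0. Pow y)"
  have fy: "finite y" if yR: "y \<in> R0" for y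
  proof -
    have "y \<subseteq> {..<m}" using yR Jsub unfolding R0_def by auto
    then show ?thesis using finite_subset[of y "{..<m}"] by auto
  qed
  have fSS: "finite SS" unfolding SS_def using fR0 fy by auto
  have cSS: "real (card SS) \<le> Ns - 1"
  proof -
    have "card SS \<le> card R0 * 2 ^ s0" unfolding SS_def
    proof (rule card_UN_bound[OF fR0])
      fix y assume y: "y \<in> R0"
      have "card (Pow y) = 2 ^ card y" by (rule card_Pow[OF fy[OF y]])
      also have "\<dots> \<le> 2 ^ s0" using Jcard y unfolding R0_def by (intro power_increasing) auto
      finally show "card (Pow y) \<le> 2 ^ s0" .
    qed
    also have "\<dots> \<le> Q * 2 ^ s0" using cR0 by simp
    finally have "card SS \<le> Q * 2 ^ s0" .
    then have "real (card SS) \<le> real (Q * 2 ^ s0)" by (simp only: of_nat_le_iff)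
    then have "real (card SS) \<le> real Q * 2 ^ s0" by simp
    then show ?thesis unfolding Ns_def by simp
  qed
  have SSprop: "S \<subseteq> {..<m} \<and> card S \<le> s0" if SS': "S \<in> SS" for S
  proof -
    obtain y where y: "y \<in> R0" "S \<subseteq> y" using SS' unfolding SS_def by auto
    have yJ: "y \<in> ?Js" using y R0_def by auto
    have "S \<subseteq> {..<m}" using Jsub[OF yJ] y(2) by auto
    moreover have "card S \<le> card y" using y(2) fy[OF y(1)] by (rule card_mono[rotated])
    ultimately show ?thesis using Jcard[OF yJ] by simp
  qed
  have lam0pos: "lam0 > 0" unfolding lam0_def using eta0 by simp
  have Lamlb: "?Lam S \<ge> lam0" if SS': "S \<in> SS" for S
    unfolding lam0_def using SSprop[OF SS'] by (intro Lam_lb[OF fG sG' sp eta eta0 eta1 cG M]) auto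
  have C1ge: "C1 \<ge> 2" unfolding C1_def by simp
  have cpos: "c > 0" unfolding c_def using lam0pos C1ge by simp
  have tpos: "t > 0" unfolding t_def using eps cpos by simp
  have tle: "t \<le> lam0 / 2"
  proof -
    have "c \<le> lam0 / 2" unfolding c_def using lam0pos C1ge by (simp add: field_simps)
    moreover have "\<epsilon> * c \<le> 1 * c" using eps cpos by (intro mult_right_mono) auto
    ultimately show ?thesis unfolding t_def by linarith
  qed
  have Ns1: "Ns \<ge> 1" unfolding Ns_def by simp
  have Npos: "N > 0"
  proof -
    have "ln (1 / \<delta>) > 0" using del by simp
    moreover have "K > 0"
    proof -
      have "ln (2 * Ns) \<ge> 0" using Ns1 by simp
      then have "ln (2 * Ns) / ln 2 \<ge> 0" by simp
      then have a: "1 + ln (2 * Ns) / ln 2 > 0" by linarith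
      have b: "2 / c\<^sup>2 > 0" using cpos by simp
      show ?thesis unfolding K by (rule mult_pos_pos[OF b a])
    qed
    ultimately have "K / \<epsilon>\<^sup>2 * ln (1 / \<delta>) > 0" using eps by simp
    then show ?thesis using NK by linarith
  qed
  define Bad where "Bad = (\<lambda>S. {\<omega>. t \<le> \<bar>?mean \<omega> S - ?Lam S\<bar>})"
  have pB: "measure_pmf.prob ?PP (Bad S) \<le> 2 * exp (- real N * t\<^sup>2 / 2)" for S
    unfolding Bad_def by (rule hoeff[OF _ Npos]) (use abs_comm tpos in auto)
  have eb: "2 * Ns * exp (- real N * t\<^sup>2 / 2) \<le> \<delta>"
    by (rule exp_bound[OF K cpos Ns1 eps(1) del t_def NK])
  have pU: "measure_pmf.prob ?PP (\<Union>S\<in>SS. Bad S) \<le> \<delta>"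
  proof -
    have "measure_pmf.prob ?PP (\<Union>S\<in>SS. Bad S) \<le> (\<Sum>S\<in>SS. measure_pmf.prob ?PP (Bad S))"
      by (rule measure_pmf.finite_measure_subadditive_finite[OF fSS]) auto
    also have "\<dots> \<le> (\<Sum>S\<in>SS. 2 * exp (- real N * t\<^sup>2 / 2))" by (intro sum_mono pB)
    also have "\<dots> = real (card SS) * (2 * exp (- real N * t\<^sup>2 / 2))" by simp
    also have "\<dots> \<le> Ns * (2 * exp (- real N * t\<^sup>2 / 2))" using cSS by (intro mult_right_mono) auto
    also have "\<dots> \<le> \<delta>" using eb by (simp add: mult_ac)
    finally show ?thesis .
  qed
  have exactJ: "Xest m ?Yt ?Js J = lognu n m M Gam supp Pg J"
    by (rule exact[OF fG sG' sp pos J])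
  have good: "\<bar>Xest m (Yemp n M N \<omega>) ?Js J - lognu n m M Gam supp Pg J\<bar> \<le> \<epsilon>"
    if w: "\<omega> \<notin> (\<Union>S\<in>SS. Bad S)" for \<omega>
  proof -
    define D where "D = (\<lambda>S. Yemp n M N \<omega> S - ?Yt S)"
    define b where "b = \<epsilon> / C1"
    have Db: "\<bar>D S\<bar> \<le> b" if S: "S \<in> SS" for S
    proof -
      have close: "\<bar>?mean \<omega> S - ?Lam S\<bar> < t" using w S unfolding Bad_def by auto
      have Lg: "?Lam S \<ge> lam0" using Lamlb[OF S] .
      have Lp: "?Lam S > 0" using Lg lam0pos by simp
      have "\<bar>?mean \<omega> S - ?Lam S\<bar> \<le> ?Lam S / 2" using close tle Lg by linarith
      then have "\<bar>ln (?mean \<omega> S) - ln (?Lam S)\<bar> \<le> 2 * \<bar>?mean \<omega> S - ?Lam S\<bar> / ?Lam S"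
        by (rule ln_close[OF Lp])
      also have "\<dots> \<le> 2 * t / ?Lam S" using close Lp by (intro divide_right_mono) auto
      also have "\<dots> \<le> 2 * t / lam0" using Lg lam0pos tpos by (intro divide_left_mono) auto
      also have "\<dots> = b" unfolding b_def t_def c_def using lam0pos C1ge by (simp add: field_simps)
      finally show ?thesis unfolding D_def Yemp_def by simp
    qed
    have "Xest m (Yemp n M N \<omega>) ?Js J - lognu n m M Gam supp Pg J
        = Xrec m (Yemp n M N \<omega>) ?Js J - Xrec m ?Yt ?Js J"
      using exactJ unfolding Xest_def by simp
    also have "\<dots> = Xrec m D ?Js J" unfolding D_def by (rule Xrec_diff)
    finally have eq: "Xest m (Yemp n M N \<omega>) ?Js J - lognu n m M Gam supp Pg J = Xrec m D ?Js J" .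
    have "\<bar>Xrec m D ?Js J\<bar> \<le> 2 * b * (real Q + 1) ^ (s0 - card J)"
    proof (rule Xrec_bound[OF fJs, of J Q s0 D b])
      show "card {y\<in>?Js. J \<subseteq> y} \<le> Q" using cR0 unfolding R0_def .
    next
      fix y assume y: "y \<in> ?Js" "J \<subseteq> y"
      have "finite y" using Jsub[OF y(1)] finite_subset[of y "{..<m}"] by auto
      then show "finite y \<and> card y \<le> s0" using Jcard[OF y(1)] by simp
    next
      fix y S assume y: "y \<in> ?Js" "J \<subseteq> y" and Sy: "S \<subseteq> y"
      then have "S \<in> SS" unfolding SS_def R0_def by auto
      then show "\<bar>D S\<bar> \<le> b" by (rule Db)
    qed (use J in auto)
    also have "\<dots> \<le> 2 * b * (real Q + 1) ^ s0"
    proof -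
      have b0: "b \<ge> 0" unfolding b_def using eps C1ge by simp
      have "(real Q + 1) ^ (s0 - card J) \<le> (real Q + 1) ^ s0" by (intro power_increasing) auto
      then show ?thesis using b0 by (intro mult_left_mono) auto
    qed
    also have "\<dots> = \<epsilon>" unfolding b_def C1_def by (simp add: field_simps)
    finally show ?thesis unfolding eq .
  qed
  have "{\<omega>. \<bar>Xest m (Yemp n M N \<omega>) ?Js J - lognu n m M Gam supp Pg J\<bar> \<le> \<epsilon>} \<supseteq> space (measure_pmf ?PP) - (\<Union>S\<in>SS. Bad S)"
    using good by auto
  then have "measure_pmf.prob ?PP {\<omega>. \<bar>Xest m (Yemp n M N \<omega>) ?Js J - lognu n m M Gam supp Pg J\<bar> \<le> \<epsilon>}
      \<ge> measure_pmf.prob ?PP (space (measure_pmf ?PP) - (\<Union>S\<in>SS. Bad S))"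
    by (intro measure_pmf.finite_measure_mono) auto
  moreover have "measure_pmf.prob ?PP (space (measure_pmf ?PP) - (\<Union>S\<in>SS. Bad S)) = 1 - measure_pmf.prob ?PP (\<Union>S\<in>SS. Bad S)"
    by (rule measure_pmf.prob_compl) auto
  ultimately show ?thesis using pU by linarith
qed


theorem lemma17:
  fixes rG cG rs cs :: nat and \<eta> :: real
  assumes "\<eta> > 0"
  shows "\<exists>K::real. \<forall>(n::nat) (m::nat) (Gam::nat set) (supp::nat \<Rightarrow> nat set) (Pg::nat \<Rightarrow> pauli pmf)
      (M::nat \<Rightarrow> pauli) (J::nat set) (\<epsilon>::real) (\<delta>::real) (N::nat).
    finite Gam
    \<and> (\<forall>g\<in>Gam. supp g \<subseteq> {..<n} \<and> card (supp g) \<le> rG)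
    \<and> (\<forall>j<n. card {g\<in>Gam. j \<in> supp g} \<le> cG)
    \<and> (\<forall>g\<in>Gam. set_pmf (Pg g) \<subseteq> paulis_on (supp g))
    \<and> (\<forall>g\<in>Gam. pmf (Pg g) Iall > 1/2 \<and> (\<forall>e\<in>nontriv_on (supp g). pmf (Pg g) e > 0))
    \<and> (\<forall>g\<in>Gam. pmf (Pg g) Iall \<ge> 1/2 + \<eta>)
    \<and> (\<forall>i<m. supported_on (M i) {..<n} \<and> weight (M i) \<le> rs)
    \<and> (\<forall>j<n. card {i\<in>{..<m}. M i j \<noteq> (False, False)} \<le> cs)
    \<and> (\<forall>i<m. \<forall>i'<m. symp n (M i) (M i') = 0)
    \<and> J \<in> class_synds n m M Gam supp \<and> J \<noteq> {}
    \<and> 0 < \<epsilon> \<and> \<epsilon> < 1 \<and> 0 < \<delta> \<and> \<delta> < 1/2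
    \<and> real N \<ge> K / \<epsilon>\<^sup>2 * ln (1 / \<delta>)
    \<longrightarrow> measure_pmf.prob (Pi_pmf {..<N} Iall (\<lambda>_. Ptot Gam Pg))
          {\<omega>. \<bar>Xest m (Yemp n M N \<omega>) (class_synds n m M Gam supp) J
                 - lognu n m M Gam supp Pg J\<bar> \<le> \<epsilon>} \<ge> 1 - \<delta>"
  apply (rule exI[of _ "2 / ((2 * \<eta>) ^ (rG * cs * rs * cG) / (2 * (2 * (real (rs * cG * 4 ^ rG) + 1) ^ (rG * cs))))\<^sup>2 * (1 + ln (2 * (real (rs * cG * 4 ^ rG) * 2 ^ (rG * cs) + 1)) / ln 2)"], intro allI impI, elim conjE)
  apply (rule main_bound[OF assms refl])
  apply assumption+
  done

end
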